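(* Let $$\mathcal{Q}=\{(x,y,t)\in\mathbb{R}^3:\ 1-x^2-y^2=\cos(t)\,((1+x)^2+y^2)\}.$$ The connected components of $\mathcal{Q}\cap\{x^2+y^2<1\}$ are the sets $\mathcal{Q}_k=\{(x,y,t): x^2+y^2<1,\ 1-x^2-y^2=\cos t\,((1+x)^2+y^2),\ t\in(2\pi k-\pi/2,\,2\pi k+\pi/2)\}$, $k\in\mathbb{Z}$, and each $\mathcal{Q}_k$, viewed in $\mathbb{D}\times\mathbb{R}$, is a properly embedded minimal surface congruent (by the isometry $g\times$(vertical translation)) to the parabolic catenoid $\Psi_1(\mathbb{R}\times(0,\pi))$, where $\Psi_1(x,t)=(x,\sin t,t)\in\mathfrak{H}\times\mathbb{R}$.
   Context: $\mathbb{D}=\{z:|z|<1\}$ with metric $\frac{4|dz|^2}{(1-|z|^2)^2}$ and $\mathfrak{H}=\{x+{\rm i}y:y>0\}$ with metric $\frac{dx^2+dy^2}{y^2}$ are models of $\mathbb{H}^2$; products with $\mathbb{R}$ carry the product metric with $dt^2$. The isometry $g:\mathbb{D}\to\mathfrak{H}$ is $g(z)={\rm i}\frac{1-z}{1+z}$. Points of $\mathbb{D}\times\mathbb{R}$ are identified with $(x,y,t)\in\mathbb{R}^3$, $x^2+y^2<1$, $z=x+{\rm i}y$. *)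

theory Defs
  imports "HOL-Analysis.Analysis"
begin

type_synonym pt3 = "real \<times> real \<times> real"

definition coord3 :: "nat \<Rightarrow> pt3 \<Rightarrow> real" where
  "coord3 i p = (case p of (x,y,t) \<Rightarrow> if i = 0 then x else if i = 1 then y else t)"

definition upd3 :: "nat \<Rightarrow> pt3 \<Rightarrow> real \<Rightarrow> pt3" where
  "upd3 i p s = (case p of (x,y,t) \<Rightarrow>
      if i = 0 then (s,y,t) else if i = 1 then (x,s,t) else (x,y,s))"

definition pd :: "nat \<Rightarrow> (pt3 \<Rightarrow> real) \<Rightarrow> pt3 \<Rightarrow> real" where
  "pd i F p = deriv (\<lambda>s. F (upd3 i p s)) (coord3 i p)"

definition has_partials_on :: "(pt3 \<Rightarrow> real) \<Rightarrow> pt3 set \<Rightarrow> bool" where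
  "has_partials_on F U \<longleftrightarrow>
     (\<forall>i<3. \<forall>p\<in>U. (\<lambda>s. F (upd3 i p s)) differentiable (at (coord3 i p)))"

definition C2_on :: "pt3 set \<Rightarrow> (pt3 \<Rightarrow> real) \<Rightarrow> bool" where
  "C2_on U F \<longleftrightarrow> continuous_on U F \<and> has_partials_on F U \<and>
     (\<forall>i<3. continuous_on U (pd i F) \<and> has_partials_on (pd i F) U \<and>
        (\<forall>j<3. continuous_on U (pd j (pd i F))))"

text \<open>Minimal (embedded) surface S in an open set \<Omega> of R^3 equipped with the metric
  lam(x,y,t)^2 (dx^2+dy^2) + dt^2 (lam independent of t): locally S is the regular
  zero set of a C^2 function F, and the mean curvature div_g(grad F/|grad F|) vanishes.
  With sqrt(det g) = lam^2, grad F = (F_x/lam^2, F_y/lam^2, F_t), this divergence is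
  (1/lam^2)[d_x(F_x/n) + d_y(F_y/n)] + d_t(F_t/n), n = |grad F|_g.\<close>
definition minimal_surface_in :: "(pt3 \<Rightarrow> real) \<Rightarrow> pt3 set \<Rightarrow> pt3 set \<Rightarrow> bool" where
  "minimal_surface_in lam \<Omega> S \<longleftrightarrow> S \<subseteq> \<Omega> \<and>
     (\<forall>p\<in>S. \<exists>U F. open U \<and> p \<in> U \<and> U \<subseteq> \<Omega> \<and> C2_on U F \<and>
        S \<inter> U = {q\<in>U. F q = 0} \<and>
        (\<forall>q\<in>S \<inter> U. (\<exists>i<3. pd i F q \<noteq> 0) \<and>
           (let n = (\<lambda>r. sqrt (((pd 0 F r)\<^sup>2 + (pd 1 F r)\<^sup>2) / (lam r)\<^sup>2 + (pd 2 F r)\<^sup>2))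
            in pd 0 (\<lambda>r. pd 0 F r / n r) q + pd 1 (\<lambda>r. pd 1 F r / n r) q
               + (lam q)\<^sup>2 * pd 2 (\<lambda>r. pd 2 F r / n r) q = 0)))"

definition DR :: "pt3 set" where
  "DR = {(x,y,t). x\<^sup>2 + y\<^sup>2 < 1}"

definition lamD :: "pt3 \<Rightarrow> real" where
  "lamD p = (case p of (x,y,t) \<Rightarrow> 2 / (1 - x\<^sup>2 - y\<^sup>2))"

definition properly_embedded_minimal_DR :: "pt3 set \<Rightarrow> bool" where
  "properly_embedded_minimal_DR S \<longleftrightarrow> minimal_surface_in lamD DR S \<and> closedin (top_of_set DR) S"

definition Qset :: "pt3 set" where
  "Qset = {(x,y,t). 1 - x\<^sup>2 - y\<^sup>2 = cos t * ((1 + x)\<^sup>2 + y\<^sup>2)}"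

definition Qk :: "int \<Rightarrow> pt3 set" where
  "Qk k = {(x,y,t). x\<^sup>2 + y\<^sup>2 < 1 \<and> 1 - x\<^sup>2 - y\<^sup>2 = cos t * ((1 + x)\<^sup>2 + y\<^sup>2) \<and>
              2 * pi * real_of_int k - pi / 2 < t \<and> t < 2 * pi * real_of_int k + pi / 2}"

text \<open>The isometry g : D \<rightarrow> upper half plane.\<close>
definition gmap :: "complex \<Rightarrow> complex" where
  "gmap z = \<i> * (1 - z) / (1 + z)"

text \<open>g times vertical translation by c, on points (x,y,t), H x R written as (u,v,t), v>0.\<close>
definition gtrans :: "real \<Rightarrow> pt3 \<Rightarrow> pt3" where
  "gtrans c p = (case p of (x,y,t) \<Rightarrow> (Re (gmap (Complex x y)), Im (gmap (Complex x y)), t + c))"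

definition Psi1 :: "real \<times> real \<Rightarrow> pt3" where
  "Psi1 p = (case p of (x,t) \<Rightarrow> (x, sin t, t))"

end

theory Submission
  imports Defs
begin


definition DD :: "real \<Rightarrow> real \<Rightarrow> real" where "DD x y = (1+x)^2 + y^2"
definition vv :: "real \<Rightarrow> real \<Rightarrow> real" where "vv x y = (1 - x^2 - y^2) / DD x y"
definition vx :: "real \<Rightarrow> real \<Rightarrow> real" where "vx x y = -2*((1+x)^2 - y^2) / (DD x y)^2"
definition vy :: "real \<Rightarrow> real \<Rightarrow> real" where "vy x y = -4*y*(1+x) / (DD x y)^2"
definition vxx :: "real \<Rightarrow> real \<Rightarrow> real" where "vxx x y = 4*(1+x)*((1+x)^2 - 3*y^2) / (DD x y)^3"
definition vxy :: "real \<Rightarrow> real \<Rightarrow> real" where "vxy x y = 4*y*(3*(1+x)^2 - y^2) / (DD x y)^3"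
definition nn :: "real \<Rightarrow> real \<Rightarrow> real \<Rightarrow> real" where "nn x y t = sqrt ((vv x y)^2 + (sin t)^2)"



lemma d_vv_x: "DD x y \<noteq> 0 \<Longrightarrow> ((\<lambda>s. vv s y) has_real_derivative vx x y) (at x)"
  unfolding vv_def vx_def DD_def by ((rule derivative_eq_intros refl | simp)+, (simp add: divide_simps)?, (algebra)?)
lemma d_vv_y: "DD x y \<noteq> 0 \<Longrightarrow> ((\<lambda>s. vv x s) has_real_derivative vy x y) (at y)"
  unfolding vv_def vy_def DD_def by ((rule derivative_eq_intros refl | simp)+, (simp add: divide_simps)?, (algebra)?)
lemma d_vx_x: "DD x y \<noteq> 0 \<Longrightarrow> ((\<lambda>s. vx s y) has_real_derivative vxx x y) (at x)"
  unfolding vxx_def vx_def DD_def by ((rule derivative_eq_intros refl | simp)+, (simp add: divide_simps)?, (algebra)?)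
lemma d_vx_y: "DD x y \<noteq> 0 \<Longrightarrow> ((\<lambda>s. vx x s) has_real_derivative vxy x y) (at y)"
  unfolding vxy_def vx_def DD_def by ((rule derivative_eq_intros refl | simp)+, (simp add: divide_simps)?, (algebra)?)
lemma d_vy_x: "DD x y \<noteq> 0 \<Longrightarrow> ((\<lambda>s. vy s y) has_real_derivative vxy x y) (at x)"
  unfolding vxy_def vy_def DD_def by ((rule derivative_eq_intros refl | simp)+, (simp add: divide_simps)?, (algebra)?)
lemma d_vy_y: "DD x y \<noteq> 0 \<Longrightarrow> ((\<lambda>s. vy x s) has_real_derivative - vxx x y) (at y)"
  unfolding vxx_def vy_def DD_def by ((rule derivative_eq_intros refl | simp)+, (simp add: divide_simps)?, (algebra)?)

lemma d_nn_x: assumes "DD x y \<noteq> 0" "vv x y ^2 + sin t ^2 > 0"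
  shows "((\<lambda>s. nn s y t) has_real_derivative vv x y * vx x y / nn x y t) (at x)"
proof -
  have h: "((\<lambda>s. vv s y ^2 + sin t ^2) has_real_derivative 2 * vv x y * vx x y) (at x)"
    by (auto intro!: derivative_eq_intros d_vv_x assms)
  from DERIV_chain2[where f=sqrt, OF DERIV_real_sqrt[OF assms(2)] h] show ?thesis
    unfolding nn_def using assms by (simp add: field_simps)
qed

lemma d_nn_y: assumes "DD x y \<noteq> 0" "vv x y ^2 + sin t ^2 > 0"
  shows "((\<lambda>s. nn x s t) has_real_derivative vv x y * vy x y / nn x y t) (at y)"
proof -
  have h: "((\<lambda>s. vv x s ^2 + sin t ^2) has_real_derivative 2 * vv x y * vy x y) (at y)"
    by (auto intro!: derivative_eq_intros d_vv_y assms)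
  from DERIV_chain2[where f=sqrt, OF DERIV_real_sqrt[OF assms(2)] h] show ?thesis
    unfolding nn_def using assms by (simp add: field_simps)
qed

lemma d_nn_t: assumes "vv x y ^2 + sin t ^2 > 0"
  shows "((\<lambda>s. nn x y s) has_real_derivative sin t * cos t / nn x y t) (at t)"
proof -
  have h: "((\<lambda>s. vv x y ^2 + sin s ^2) has_real_derivative 2 * sin t * cos t) (at t)"
    by (auto intro!: derivative_eq_intros)
  from DERIV_chain2[where f=sqrt, OF DERIV_real_sqrt[OF assms(1)] h] show ?thesis
    unfolding nn_def using assms by (simp add: field_simps)
qed

lemma nn_pos: "vv x y ^2 + sin t ^2 > 0 \<Longrightarrow> nn x y t > 0"
  unfolding nn_def by simp

lemma aux_q: "(n::real) \<noteq> 0 \<Longrightarrow> (a * n - b * (c / n)) / (n * n) = a / n - b * c / n ^ 3"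
  by (simp add: field_simps power3_eq_cube)

lemma d_G0_x: assumes "DD x y \<noteq> 0" "vv x y ^2 + sin t ^2 > 0"
  shows "((\<lambda>s. vx s y / nn s y t) has_real_derivative
     vxx x y / nn x y t - vv x y * (vx x y)^2 / (nn x y t)^3) (at x)"
proof -
  have p: "nn x y t > 0" "nn x y t \<noteq> 0" using nn_pos[OF assms(2)] by auto
  show ?thesis
  apply (rule derivative_eq_intros refl d_vx_x d_nn_x assms p(2))+
  by (subst aux_q[OF p(2)]) (simp add: power2_eq_square mult_ac)
qed

lemma d_G1_y: assumes "DD x y \<noteq> 0" "vv x y ^2 + sin t ^2 > 0"
  shows "((\<lambda>s. vy x s / nn x s t) has_real_derivative
     - vxx x y / nn x y t - vv x y * (vy x y)^2 / (nn x y t)^3) (at y)"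
proof -
  have p: "nn x y t > 0" "nn x y t \<noteq> 0" using nn_pos[OF assms(2)] by auto
  show ?thesis
  apply (rule derivative_eq_intros refl d_vy_y d_nn_y assms p(2))+
  by (subst aux_q[OF p(2)]) (simp add: power2_eq_square mult_ac)
qed

lemma d_G2_t: assumes "vv x y ^2 + sin t ^2 > 0"
  shows "((\<lambda>s. sin s / nn x y s) has_real_derivative
     cos t / nn x y t - (sin t)^2 * cos t / (nn x y t)^3) (at t)"
proof -
  have p: "nn x y t > 0" "nn x y t \<noteq> 0" using nn_pos[OF assms(1)] by auto
  show ?thesis
  apply (rule derivative_eq_intros refl d_nn_t assms p(2))+
  by (subst aux_q[OF p(2)]) (simp add: power2_eq_square mult_ac)
qed

lemma grad_id: "DD x y \<noteq> 0 \<Longrightarrow> (vx x y)^2 + (vy x y)^2 = 4 / (DD x y)^2"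
  unfolding vx_def vy_def DD_def by (simp add: divide_simps) algebra

lemma pd0_at: "((\<lambda>s. F (s,y,t)) has_real_derivative d) (at x) \<Longrightarrow> pd 0 F (x,y,t) = d"
  unfolding pd_def upd3_def coord3_def by (simp add: DERIV_imp_deriv)
lemma pd1_at: "((\<lambda>s. F (x,s,t)) has_real_derivative d) (at y) \<Longrightarrow> pd 1 F (x,y,t) = d"
  unfolding pd_def upd3_def coord3_def by (simp add: DERIV_imp_deriv)
lemma pd2_at: "((\<lambda>s. F (x,y,s)) has_real_derivative d) (at t) \<Longrightarrow> pd 2 F (x,y,t) = d"
  unfolding pd_def upd3_def coord3_def by (simp add: DERIV_imp_deriv)

lemma tr0: assumes "open U" "(x,y,t) \<in> U" "\<And>r. r \<in> U \<Longrightarrow> F r = G r"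
  "((\<lambda>s. G (s,y,t)) has_real_derivative d) (at x)"
  shows "((\<lambda>s. F (s,y,t)) has_real_derivative d) (at x)"
proof -
  have "open ((\<lambda>s. (s,y,t)) -` U)"
    by (rule continuous_open_vimage[OF assms(1)]) (intro continuous_intros)
  then show ?thesis
    by (rule has_field_derivative_transform_within_open[OF assms(4)]) (use assms in auto)
qed
lemma tr1: assumes "open U" "(x,y,t) \<in> U" "\<And>r. r \<in> U \<Longrightarrow> F r = G r"
  "((\<lambda>s. G (x,s,t)) has_real_derivative d) (at y)"
  shows "((\<lambda>s. F (x,s,t)) has_real_derivative d) (at y)"
proof -
  have "open ((\<lambda>s. (x,s,t)) -` U)"
    by (rule continuous_open_vimage[OF assms(1)]) (intro continuous_intros)
  then show ?thesis
    by (rule has_field_derivative_transform_within_open[OF assms(4)]) (use assms in auto)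
qed
lemma tr2: assumes "open U" "(x,y,t) \<in> U" "\<And>r. r \<in> U \<Longrightarrow> F r = G r"
  "((\<lambda>s. G (x,y,s)) has_real_derivative d) (at t)"
  shows "((\<lambda>s. F (x,y,s)) has_real_derivative d) (at t)"
proof -
  have "open ((\<lambda>s. (x,y,s)) -` U)"
    by (rule continuous_open_vimage[OF assms(1)]) (intro continuous_intros)
  then show ?thesis
    by (rule has_field_derivative_transform_within_open[OF assms(4)]) (use assms in auto)
qed

lemma has_partialsI:
  assumes "\<And>x y t. (x,y,t) \<in> U \<Longrightarrow> \<exists>d. ((\<lambda>s. F (s,y,t)) has_real_derivative d) (at x)"
    "\<And>x y t. (x,y,t) \<in> U \<Longrightarrow> \<exists>d. ((\<lambda>s. F (x,s,t)) has_real_derivative d) (at y)"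
    "\<And>x y t. (x,y,t) \<in> U \<Longrightarrow> \<exists>d. ((\<lambda>s. F (x,y,s)) has_real_derivative d) (at t)"
  shows "has_partials_on F U"
  unfolding has_partials_on_def
proof (intro allI impI ballI)
  fix i :: nat and p assume "i < 3" "p \<in> U"
  obtain x y t where p: "p = (x,y,t)" by (cases p) auto
  have "i = 0 \<or> i = 1 \<or> i = 2" using \<open>i<3\<close> by auto
  then show "(\<lambda>s. F (upd3 i p s)) differentiable at (coord3 i p)"
    using assms[of x y t] \<open>p \<in> U\<close> unfolding p upd3_def coord3_def real_differentiable_def
    by auto
qed

definition FF :: "pt3 \<Rightarrow> real" where
  "FF p = vv (fst p) (fst (snd p)) - cos (snd (snd p))"

definition UU :: "int \<Rightarrow> pt3 set" where
  "UU k = {p. (fst p)^2 + (fst (snd p))^2 < 1 \<and> 2 * pi * real_of_int k - pi / 2 < snd (snd p)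
      \<and> snd (snd p) < 2 * pi * real_of_int k + pi / 2}"

lemma open_UU: "open (UU k)"
  unfolding UU_def
  by (intro open_Collect_conj open_Collect_less continuous_intros)

lemma cos_shift: "cos (t - 2 * pi * real_of_int k) = cos t"
  by (simp add: cos_diff)

lemma DD_pos: "x^2 + y^2 < 1 \<Longrightarrow> DD x y > 0"
  unfolding DD_def
proof -
  assume h: "x^2 + y^2 < 1"
  have "(1+x)^2 + y^2 \<noteq> 0"
  proof
    assume "(1+x)^2 + y^2 = 0"
    then have "1 + x = 0" "y = 0" by (auto simp: add_nonneg_eq_0_iff)
    then have "x = -1" by simp
    then show False using h \<open>y = 0\<close> by simp
  qed
  then show "(1+x)^2 + y^2 > 0" by (simp add: add_pos_nonneg order_less_le)
qed

lemma vv_pos: "x^2 + y^2 < 1 \<Longrightarrow> vv x y > 0"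
  using DD_pos[of x y] unfolding vv_def by simp

lemma UU_facts: assumes "(x,y,t) \<in> UU k"
  shows "DD x y > 0" "DD x y \<noteq> 0" "vv x y > 0" "vv x y ^2 + sin t ^2 > 0" "cos t > 0" "x^2+y^2 < 1"
proof -
  show "DD x y > 0" "DD x y \<noteq> 0" "vv x y > 0" "x^2+y^2 < 1" using assms DD_pos vv_pos unfolding UU_def by force+
  then show "vv x y ^2 + sin t ^2 > 0" by (simp add: add_pos_nonneg)
  have "cos (t - 2 * pi * real_of_int k) > 0" using assms unfolding UU_def
    by (intro cos_gt_zero_pi) auto
  then show "cos t > 0" by (simp add: cos_shift)
qed

definition P0 :: "pt3 \<Rightarrow> real" where "P0 p = vx (fst p) (fst (snd p))"
definition P1 :: "pt3 \<Rightarrow> real" where "P1 p = vy (fst p) (fst (snd p))"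
definition P2 :: "pt3 \<Rightarrow> real" where "P2 p = sin (snd (snd p))"

lemma dFF0: "DD x y \<noteq> 0 \<Longrightarrow> ((\<lambda>s. FF (s,y,t)) has_real_derivative vx x y) (at x)"
  unfolding FF_def by (auto intro!: derivative_eq_intros d_vv_x)
lemma dFF1: "DD x y \<noteq> 0 \<Longrightarrow> ((\<lambda>s. FF (x,s,t)) has_real_derivative vy x y) (at y)"
  unfolding FF_def by (auto intro!: derivative_eq_intros d_vv_y)
lemma dFF2: "((\<lambda>s. FF (x,y,s)) has_real_derivative sin t) (at t)"
  unfolding FF_def by (auto intro!: derivative_eq_intros)

lemma pdFF: assumes "r \<in> UU k" shows "pd 0 FF r = P0 r" "pd 1 FF r = P1 r" "pd 2 FF r = P2 r"
proof -
  obtain x y t where r: "r = (x,y,t)" by (cases r) auto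
  have D: "DD x y \<noteq> 0" using UU_facts assms r by auto
  show "pd 0 FF r = P0 r" "pd 1 FF r = P1 r" "pd 2 FF r = P2 r"
    unfolding r P0_def P1_def P2_def using pd0_at[OF dFF0[OF D]] pd1_at[OF dFF1[OF D]] pd2_at[OF dFF2]
    by auto
qed

lemma dP0: "DD x y \<noteq> 0 \<Longrightarrow> ((\<lambda>s. P0 (s,y,t)) has_real_derivative vxx x y) (at x)"
           "DD x y \<noteq> 0 \<Longrightarrow> ((\<lambda>s. P0 (x,s,t)) has_real_derivative vxy x y) (at y)"
           "((\<lambda>s. P0 (x,y,s)) has_real_derivative 0) (at t)"
  unfolding P0_def using d_vx_x d_vx_y by auto
lemma dP1: "DD x y \<noteq> 0 \<Longrightarrow> ((\<lambda>s. P1 (s,y,t)) has_real_derivative vxy x y) (at x)"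
           "DD x y \<noteq> 0 \<Longrightarrow> ((\<lambda>s. P1 (x,s,t)) has_real_derivative - vxx x y) (at y)"
           "((\<lambda>s. P1 (x,y,s)) has_real_derivative 0) (at t)"
  unfolding P1_def using d_vy_x d_vy_y by auto
lemma dP2: "((\<lambda>s. P2 (s,y,t)) has_real_derivative 0) (at x)"
           "((\<lambda>s. P2 (x,s,t)) has_real_derivative 0) (at y)"
           "((\<lambda>s. P2 (x,y,s)) has_real_derivative cos t) (at t)"
  unfolding P2_def by (auto intro!: derivative_eq_intros)

lemma DD_nz_UU: "\<forall>p\<in>UU k. (1 + fst p)^2 + (fst (snd p))^2 \<noteq> 0"
  using UU_facts(2) unfolding DD_def by fastforce

lemma C2_FF: "C2_on (UU k) FF"
proof -
  have o: "open (UU k)" by (rule open_UU)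
  have cF: "continuous_on (UU k) FF"
    unfolding FF_def vv_def DD_def using DD_nz_UU[of k]
    by (intro continuous_intros) auto
  have hF: "has_partials_on FF (UU k)"
    proof (rule has_partialsI)
    fix x y t assume "(x,y,t) \<in> UU k"
    then have D: "DD x y \<noteq> 0" by (rule UU_facts(2))
    show "\<exists>d. ((\<lambda>s. FF (s,y,t)) has_real_derivative d) (at x)" using dFF0[OF D] by blast
    show "\<exists>d. ((\<lambda>s. FF (x,s,t)) has_real_derivative d) (at y)" using dFF1[OF D] by blast
    show "\<exists>d. ((\<lambda>s. FF (x,y,s)) has_real_derivative d) (at t)" using dFF2 by blast
  qed
  have cP: "continuous_on (UU k) P0" "continuous_on (UU k) P1" "continuous_on (UU k) P2"
    unfolding P0_def P1_def P2_def vx_def vy_def DD_def using DD_nz_UU[of k]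
    by (intro continuous_intros; auto)+
  have eqs: "\<And>r. r \<in> UU k \<Longrightarrow> pd 0 FF r = P0 r" "\<And>r. r \<in> UU k \<Longrightarrow> pd 1 FF r = P1 r"
    "\<And>r. r \<in> UU k \<Longrightarrow> pd 2 FF r = P2 r" using pdFF by auto
  have c1a: "continuous_on (UU k) (pd 0 FF)" by (rule continuous_on_eq[OF cP(1)]) (rule eqs(1)[symmetric])
  have c1b: "continuous_on (UU k) (pd 1 FF)" by (rule continuous_on_eq[OF cP(2)]) (rule eqs(2)[symmetric])
  have c1c: "continuous_on (UU k) (pd 2 FF)" by (rule continuous_on_eq[OF cP(3)]) (rule eqs(3)[symmetric])
  note c1 = c1a c1b c1c
  have h1: "has_partials_on (pd 0 FF) (UU k)" "has_partials_on (pd 1 FF) (UU k)" "has_partials_on (pd 2 FF) (UU k)"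
    proof -
    have A: "\<And>x y t. (x,y,t) \<in> UU k \<Longrightarrow> DD x y \<noteq> 0" by (rule UU_facts(2))
    show "has_partials_on (pd 0 FF) (UU k)"
    proof (rule has_partialsI)
      fix x y t assume u: "(x,y,t) \<in> UU k"
      then have D: "DD x y \<noteq> 0" by (rule A)
      show "\<exists>d. ((\<lambda>s. pd 0 FF (s,y,t)) has_real_derivative d) (at x)" using tr0[OF o u eqs(1) dP0(1)[OF D]] by blast
      show "\<exists>d. ((\<lambda>s. pd 0 FF (x,s,t)) has_real_derivative d) (at y)" using tr1[OF o u eqs(1) dP0(2)[OF D]] by blast
      show "\<exists>d. ((\<lambda>s. pd 0 FF (x,y,s)) has_real_derivative d) (at t)" using tr2[OF o u eqs(1) dP0(3)] by blast
    qed
    show "has_partials_on (pd 1 FF) (UU k)"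
    proof (rule has_partialsI)
      fix x y t assume u: "(x,y,t) \<in> UU k"
      then have D: "DD x y \<noteq> 0" by (rule A)
      show "\<exists>d. ((\<lambda>s. pd 1 FF (s,y,t)) has_real_derivative d) (at x)" using tr0[OF o u eqs(2) dP1(1)[OF D]] by blast
      show "\<exists>d. ((\<lambda>s. pd 1 FF (x,s,t)) has_real_derivative d) (at y)" using tr1[OF o u eqs(2) dP1(2)[OF D]] by blast
      show "\<exists>d. ((\<lambda>s. pd 1 FF (x,y,s)) has_real_derivative d) (at t)" using tr2[OF o u eqs(2) dP1(3)] by blast
    qed
    show "has_partials_on (pd 2 FF) (UU k)"
    proof (rule has_partialsI)
      fix x y t assume u: "(x,y,t) \<in> UU k"
      then have D: "DD x y \<noteq> 0" by (rule A)
      show "\<exists>d. ((\<lambda>s. pd 2 FF (s,y,t)) has_real_derivative d) (at x)" using tr0[OF o u eqs(3) dP2(1)] by blast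
      show "\<exists>d. ((\<lambda>s. pd 2 FF (x,s,t)) has_real_derivative d) (at y)" using tr1[OF o u eqs(3) dP2(2)] by blast
      show "\<exists>d. ((\<lambda>s. pd 2 FF (x,y,s)) has_real_derivative d) (at t)" using tr2[OF o u eqs(3) dP2(3)] by blast
    qed
  qed
  define Q where "Q i j p = (let x = fst p; y = fst (snd p); t = snd (snd p) in
     if i = 0 then (if j = 0 then vxx x y else if j = 1 then vxy x y else 0)
     else if i = 1 then (if j = 0 then vxy x y else if j = 1 then - vxx x y else 0)
     else (if j = 2 then cos t else 0))" for i j :: nat and p :: pt3
  have cQ: "continuous_on (UU k) (Q i j)" for i j
  proof -
    have cA: "continuous_on (UU k) (\<lambda>p. vxx (fst p) (fst (snd p)))"
      unfolding vxx_def DD_def using DD_nz_UU[of k] by (intro continuous_intros; auto)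
    have cB: "continuous_on (UU k) (\<lambda>p. vxy (fst p) (fst (snd p)))"
      unfolding vxy_def DD_def using DD_nz_UU[of k] by (intro continuous_intros; auto)
    have cC: "continuous_on (UU k) (\<lambda>p. - vxx (fst p) (fst (snd p)))"
      using cA by (intro continuous_intros)
    have cD: "continuous_on (UU k) (\<lambda>p. cos (snd (snd p)))"
      by (intro continuous_intros)
    have cE: "continuous_on (UU k) (\<lambda>p. 0::real)" by (intro continuous_intros)
    show ?thesis unfolding Q_def Let_def
      by (cases "i = 0"; cases "i = 1"; cases "j = 0"; cases "j = 1"; cases "j = 2")
         (simp_all add: cA cB cC cD cE)
  qed
  have eQ: "pd j (pd i FF) r = Q i j r" if "r \<in> UU k" "i < 3" "j < 3" for i j r
  proof -
    obtain x y t where r: "r = (x,y,t)" by (cases r) auto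
    have D: "DD x y \<noteq> 0" using UU_facts that r by auto
    have ru: "(x,y,t) \<in> UU k" using that r by simp
    have "i = 0 \<or> i = 1 \<or> i = 2" "j = 0 \<or> j = 1 \<or> j = 2" using that by auto
    then show ?thesis
      unfolding r Q_def Let_def
      using pd0_at[OF tr0[OF o ru eqs(1) dP0(1)[OF D]]] pd1_at[OF tr1[OF o ru eqs(1) dP0(2)[OF D]]]
        pd2_at[OF tr2[OF o ru eqs(1) dP0(3)]]
        pd0_at[OF tr0[OF o ru eqs(2) dP1(1)[OF D]]] pd1_at[OF tr1[OF o ru eqs(2) dP1(2)[OF D]]]
        pd2_at[OF tr2[OF o ru eqs(2) dP1(3)]]
        pd0_at[OF tr0[OF o ru eqs(3) dP2(1)]] pd1_at[OF tr1[OF o ru eqs(3) dP2(2)]]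
        pd2_at[OF tr2[OF o ru eqs(3) dP2(3)]]
      by auto
  qed
  have c2: "continuous_on (UU k) (pd j (pd i FF))" if "i < 3" "j < 3" for i j
    by (rule continuous_on_eq[OF cQ]) (simp add: eQ that)
  show ?thesis unfolding C2_on_def
  proof (intro conjI allI impI)
    fix i :: nat assume i: "i < 3"
    then have "i = 0 \<or> i = 1 \<or> i = 2" by auto
    then show "continuous_on (UU k) (pd i FF)" "has_partials_on (pd i FF) (UU k)"
      using c1 h1 by auto
    fix j :: nat assume "j < 3"
    then show "continuous_on (UU k) (pd j (pd i FF))" using c2 i by blast
  qed (use cF hF in auto)
qed

lemma final_alg:
  fixes n a b c v s co L :: real
  assumes "n \<noteq> 0" "a^2 + b^2 = L * v^2" "n^2 = v^2 + s^2" "co = v"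
  shows "(c / n - v * a^2 / n^3) + (- c / n - v * b^2 / n^3) + L * (co / n - s^2 * co / n^3) = 0"
proof -
  have "(c / n - v * a^2 / n^3) + (- c / n - v * b^2 / n^3) + L * (co / n - s^2 * co / n^3)
      = (- v * (a^2 + b^2) + L * (co * n^2 - s^2 * co)) / n^3"
    using assms(1) by (simp add: field_simps power3_eq_cube power2_eq_square)
  also have "\<dots> = 0" using assms(2,3,4) by (simp add: algebra_simps)
  finally show ?thesis .
qed

lemma lam_id: assumes "x^2 + y^2 < 1"
  shows "((vx x y)^2 + (vy x y)^2) / (lamD (x,y,t))^2 = (vv x y)^2"
proof -
  have D: "DD x y \<noteq> 0" using DD_pos[OF assms] by simp
  have N: "1 - x^2 - y^2 \<noteq> 0" using assms by simp
  show ?thesis unfolding grad_id[OF D] lamD_def vv_def using D N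
    by (simp add: field_simps power2_eq_square)
qed

lemma Qk_sub_UU: "Qk k \<subseteq> UU k"
  unfolding Qk_def UU_def by auto

lemma zero_set: "Qk k \<inter> UU k = {q \<in> UU k. FF q = 0}"
proof -
  have "q \<in> Qk k \<longleftrightarrow> FF q = 0" if "q \<in> UU k" for q
  proof -
    obtain x y t where q: "q = (x,y,t)" by (cases q) auto
    have D: "DD x y > 0" using UU_facts that q by auto
    have "FF q = 0 \<longleftrightarrow> (1 - x^2 - y^2) / DD x y = cos t"
      unfolding q FF_def vv_def by simp
    also have "\<dots> \<longleftrightarrow> 1 - x^2 - y^2 = cos t * DD x y" using D by (simp add: divide_eq_eq)
    finally have "FF q = 0 \<longleftrightarrow> 1 - x^2 - y^2 = cos t * ((1+x)^2 + y^2)" unfolding DD_def .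
    then show ?thesis using that unfolding q Qk_def UU_def by auto
  qed
  then show ?thesis using Qk_sub_UU by auto
qed

lemma minimal_Qk: "minimal_surface_in lamD DR (Qk k)"
  unfolding minimal_surface_in_def
proof (intro conjI ballI)
  show "Qk k \<subseteq> DR" unfolding Qk_def DR_def by auto
  fix p assume "p \<in> Qk k"
  define nf where "nf = (\<lambda>r. sqrt (((pd 0 FF r)\<^sup>2 + (pd 1 FF r)\<^sup>2) / (lamD r)\<^sup>2 + (pd 2 FF r)\<^sup>2))"
  have nfe: "nf r = nn (fst r) (fst (snd r)) (snd (snd r))" if "r \<in> UU k" for r
  proof -
    obtain x y t where r: "r = (x,y,t)" by (cases r) auto
    have "x^2+y^2<1" using UU_facts that r by auto
    then show ?thesis unfolding nf_def nn_def using pdFF[OF that] lam_id[of x y t]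
      unfolding r P0_def P1_def P2_def by simp
  qed
  have o: "open (UU k)" by (rule open_UU)
  have curv: "pd 0 (\<lambda>r. pd 0 FF r / nf r) q + pd 1 (\<lambda>r. pd 1 FF r / nf r) q
               + (lamD q)\<^sup>2 * pd 2 (\<lambda>r. pd 2 FF r / nf r) q = 0" if qQ: "q \<in> Qk k" for q
  proof -
    obtain x y t where q: "q = (x,y,t)" by (cases q) auto
    have qU: "(x,y,t) \<in> UU k" using qQ Qk_sub_UU q by auto
    note F = UU_facts[OF qU]
    define G0 where "G0 r = vx (fst r) (fst (snd r)) / nn (fst r) (fst (snd r)) (snd (snd r))" for r
    define G1 where "G1 r = vy (fst r) (fst (snd r)) / nn (fst r) (fst (snd r)) (snd (snd r))" for r
    define G2 where "G2 r = sin (snd (snd r)) / nn (fst r) (fst (snd r)) (snd (snd r))" for r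
    have e0: "pd 0 FF r / nf r = G0 r" if "r \<in> UU k" for r
      using pdFF[OF that] nfe[OF that] unfolding G0_def P0_def by simp
    have e1: "pd 1 FF r / nf r = G1 r" if "r \<in> UU k" for r
      using pdFF[OF that] nfe[OF that] unfolding G1_def P1_def by simp
    have e2: "pd 2 FF r / nf r = G2 r" if "r \<in> UU k" for r
      using pdFF[OF that] nfe[OF that] unfolding G2_def P2_def by simp
    have g0: "((\<lambda>s. G0 (s,y,t)) has_real_derivative
       vxx x y / nn x y t - vv x y * (vx x y)^2 / (nn x y t)^3) (at x)"
      unfolding G0_def using d_G0_x[OF F(2) F(4)] by simp
    have g1: "((\<lambda>s. G1 (x,s,t)) has_real_derivative
       - vxx x y / nn x y t - vv x y * (vy x y)^2 / (nn x y t)^3) (at y)"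
      unfolding G1_def using d_G1_y[OF F(2) F(4)] by simp
    have g2: "((\<lambda>s. G2 (x,y,s)) has_real_derivative
       cos t / nn x y t - (sin t)^2 * cos t / (nn x y t)^3) (at t)"
      unfolding G2_def using d_G2_t[OF F(4)] by simp
    have p0: "pd 0 (\<lambda>r. pd 0 FF r / nf r) q = vxx x y / nn x y t - vv x y * (vx x y)^2 / (nn x y t)^3"
      unfolding q by (rule pd0_at[OF tr0[OF o qU e0 g0]])
    have p1: "pd 1 (\<lambda>r. pd 1 FF r / nf r) q = - vxx x y / nn x y t - vv x y * (vy x y)^2 / (nn x y t)^3"
      unfolding q by (rule pd1_at[OF tr1[OF o qU e1 g1]])
    have p2: "pd 2 (\<lambda>r. pd 2 FF r / nf r) q = cos t / nn x y t - (sin t)^2 * cos t / (nn x y t)^3"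
      unfolding q by (rule pd2_at[OF tr2[OF o qU e2 g2]])
    have nz: "nn x y t \<noteq> 0" using nn_pos[OF F(4)] by simp
    have L: "lamD (x,y,t) ^2 \<noteq> 0" unfolding lamD_def using F(6) by simp
    have A: "(vx x y)^2 + (vy x y)^2 = (lamD (x,y,t))^2 * (vv x y)^2"
      using lam_id[OF F(6), of t] L by (simp add: field_simps)
    have n2: "(nn x y t)^2 = (vv x y)^2 + (sin t)^2"
      unfolding nn_def using F(4) by simp
    have "q \<in> {q \<in> UU k. FF q = 0}" using zero_set[of k] qQ qU q by auto
    then have co: "cos t = vv x y" unfolding q FF_def by simp
    show ?thesis unfolding p0 p1 p2 unfolding q
      by (rule final_alg[OF nz A n2 co])
  qed
  show "\<exists>U F. open U \<and> p \<in> U \<and> U \<subseteq> DR \<and> C2_on U F \<and> Qk k \<inter> U = {q \<in> U. F q = 0} \<and>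
        (\<forall>q\<in>Qk k \<inter> U. (\<exists>i<3. pd i F q \<noteq> 0) \<and>
          (let n = \<lambda>r. sqrt (((pd 0 F r)\<^sup>2 + (pd 1 F r)\<^sup>2) / (lamD r)\<^sup>2 + (pd 2 F r)\<^sup>2)
           in pd 0 (\<lambda>r. pd 0 F r / n r) q + pd 1 (\<lambda>r. pd 1 F r / n r) q +
              (lamD q)\<^sup>2 * pd 2 (\<lambda>r. pd 2 F r / n r) q = 0))"
  proof (rule exI[of _ "UU k"], rule exI[of _ FF], intro conjI ballI)
    show "open (UU k)" by (rule o)
    show "p \<in> UU k" using \<open>p \<in> Qk k\<close> Qk_sub_UU by auto
    show "UU k \<subseteq> DR" unfolding UU_def DR_def by auto
    show "C2_on (UU k) FF" by (rule C2_FF)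
    show "Qk k \<inter> UU k = {q \<in> UU k. FF q = 0}" by (rule zero_set)
    fix q assume qq: "q \<in> Qk k \<inter> UU k"
    show "let n = \<lambda>r. sqrt (((pd 0 FF r)\<^sup>2 + (pd 1 FF r)\<^sup>2) / (lamD r)\<^sup>2 + (pd 2 FF r)\<^sup>2)
           in pd 0 (\<lambda>r. pd 0 FF r / n r) q + pd 1 (\<lambda>r. pd 1 FF r / n r) q +
              (lamD q)\<^sup>2 * pd 2 (\<lambda>r. pd 2 FF r / n r) q = 0"
      using curv[of q] qq unfolding nf_def Let_def by simp
    obtain x y t where q: "q = (x,y,t)" by (cases q) auto
    have qU: "(x,y,t) \<in> UU k" using qq q by auto
    have D: "DD x y \<noteq> 0" using UU_facts[OF qU] by simp
    have "vx x y \<noteq> 0 \<or> vy x y \<noteq> 0"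
    proof (rule ccontr)
      assume "\<not> ?thesis"
      then have "(vx x y)^2 + (vy x y)^2 = 0" by simp
      then show False using grad_id[OF D] D by simp
    qed
    then show "\<exists>i<3. pd i FF q \<noteq> 0"
      using pdFF[OF qU] unfolding q P0_def P1_def by (metis fst_conv snd_conv less_numeral_extra(1) numeral_less_iff one_less_numeral_iff semiring_norm(77) zero_less_numeral)
  qed
qed

lemma cos_2pik: "cos (a + 2 * pi * real_of_int k) = cos a"
  by (simp add: cos_add)
lemma sin_2pik: "sin (a + 2 * pi * real_of_int k) = sin a"
  by (simp add: sin_add)
lemma cos_end1: "cos (2 * pi * real_of_int k + pi / 2) = 0"
  using cos_2pik[of "pi/2" k] by (simp add: add.commute)
lemma cos_end2: "cos (2 * pi * real_of_int k - pi / 2) = 0"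
  using cos_2pik[of "- (pi/2)" k] by (simp add: add.commute)

lemma gtrans_eq: "gtrans c (x,y,t) = (2 * y / DD x y, (1 - x^2 - y^2) / DD x y, t + c)"
  unfolding gtrans_def gmap_def DD_def
  by (simp add: Re_divide Im_divide power2_eq_square field_simps)

definition XX :: "real \<Rightarrow> real \<Rightarrow> real" where "XX u v = (1 - u^2 - v^2) / (u^2 + (1+v)^2)"
definition YY :: "real \<Rightarrow> real \<Rightarrow> real" where "YY u v = 2 * u / (u^2 + (1+v)^2)"
definition cc :: "int \<Rightarrow> real" where "cc k = pi / 2 - 2 * pi * real_of_int k"
definition hk :: "int \<Rightarrow> real \<times> real \<Rightarrow> pt3" where
  "hk k q = (XX (fst q) (sin (snd q)), YY (fst q) (sin (snd q)), snd q - cc k)"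

lemma XY_ids: assumes "v > 0"
  shows "1 - (XX u v)^2 - (YY u v)^2 = 4 * v / (u^2 + (1+v)^2)"
        "(1 + XX u v)^2 + (YY u v)^2 = 4 / (u^2 + (1+v)^2)"
proof -
  have E: "u^2 + (1+v)^2 > 0" using assms by (simp add: add_nonneg_pos)
  then have E': "u^2 + (1+v)^2 \<noteq> 0" by linarith
  show "1 - (XX u v)^2 - (YY u v)^2 = 4 * v / (u^2 + (1+v)^2)"
    unfolding XX_def YY_def using E' by (simp add: divide_simps) algebra
  show "(1 + XX u v)^2 + (YY u v)^2 = 4 / (u^2 + (1+v)^2)"
    unfolding XX_def YY_def using E' by (simp add: divide_simps) algebra
qed

lemma cos_scc: "cos (s - cc k) = sin s"
proof -
  have "s - cc k = (s - pi/2) + 2 * pi * real_of_int k" unfolding cc_def by simp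
  then have "cos (s - cc k) = cos (s - pi/2)" using cos_2pik[of "s - pi/2" k] by metis
  also have "\<dots> = sin s" by (simp add: cos_diff)
  finally show ?thesis .
qed

lemma sin_tcc: "sin (t + cc k) = cos t"
proof -
  have "t + cc k = ((t - 2 * pi * real_of_int k) + pi/2)" unfolding cc_def by simp
  then have "sin (t + cc k) = sin ((t - 2 * pi * real_of_int k) + pi/2)" by metis
  also have "\<dots> = cos (t - 2 * pi * real_of_int k)" by (simp add: sin_add)
  finally show ?thesis by (simp add: cos_shift)
qed

lemma hk_props: assumes "0 < s" "s < pi"
  shows "hk k (u,s) \<in> Qk k" "gtrans (cc k) (hk k (u,s)) = Psi1 (u,s)"
proof -
  define v where "v = sin s"
  have v: "v > 0" unfolding v_def using assms by (simp add: sin_gt_zero)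
  define E where "E = u^2 + (1+v)^2"
  have E: "E > 0" unfolding E_def using v by (simp add: add_nonneg_pos)
  define X Y where "X = XX u v" "Y = YY u v"
  have I1: "1 - X^2 - Y^2 = 4 * v / E" and I2: "(1 + X)^2 + Y^2 = 4 / E"
    using XY_ids[OF v, of u] unfolding X_Y_def E_def by auto
  have h: "hk k (u,s) = (X, Y, s - cc k)" unfolding hk_def X_Y_def v_def by simp
  have in1: "X^2 + Y^2 < 1" using I1 E v by (smt (verit) divide_pos_pos)
  have eq: "1 - X^2 - Y^2 = cos (s - cc k) * ((1 + X)^2 + Y^2)"
    unfolding I1 I2 cos_scc v_def[symmetric] by simp
  have iv: "2 * pi * real_of_int k - pi / 2 < s - cc k" "s - cc k < 2 * pi * real_of_int k + pi / 2"
    using assms unfolding cc_def by auto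
  show "hk k (u,s) \<in> Qk k" unfolding h Qk_def using in1 eq iv by auto
  have D: "DD X Y = 4 / E" unfolding DD_def using I2 .
  have "2 * Y / DD X Y = 2 * Y * E / 4" using E by (simp add: D)
  also have "\<dots> = u" unfolding X_Y_def YY_def E_def[symmetric] using E by simp
  finally have "2 * Y / DD X Y = u" .
  moreover have "(1 - X^2 - Y^2) / DD X Y = sin s" unfolding D I1 v_def[symmetric] using E by simp
  ultimately show "gtrans (cc k) (hk k (u,s)) = Psi1 (u,s)"
    unfolding h gtrans_eq Psi1_def by simp
qed

lemma alg_inv: fixes x y :: real assumes D: "(1+x)^2+y^2 > 0"
  shows "(2*y/((1+x)^2+y^2))^2 + (1 + (1-x^2-y^2)/((1+x)^2+y^2))^2 = 4/((1+x)^2+y^2)"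
    "(1 - (2*y/((1+x)^2+y^2))^2 - ((1-x^2-y^2)/((1+x)^2+y^2))^2) / (4/((1+x)^2+y^2)) = x"
    "2*(2*y/((1+x)^2+y^2)) / (4/((1+x)^2+y^2)) = y"
proof -
  define Dv where "Dv = (1+x)^2+y^2"
  have Dn: "Dv \<noteq> 0" using D unfolding Dv_def by linarith
  show "(2*y/((1+x)^2+y^2))^2 + (1 + (1-x^2-y^2)/((1+x)^2+y^2))^2 = 4/((1+x)^2+y^2)"
    unfolding Dv_def[symmetric] using Dn by (simp add: divide_simps) (simp add: Dv_def power2_eq_square algebra_simps)
  show "(1 - (2*y/((1+x)^2+y^2))^2 - ((1-x^2-y^2)/((1+x)^2+y^2))^2) / (4/((1+x)^2+y^2)) = x"
    unfolding Dv_def[symmetric] using Dn by (simp add: divide_simps) (simp add: Dv_def power2_eq_square algebra_simps)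
  show "2*(2*y/((1+x)^2+y^2)) / (4/((1+x)^2+y^2)) = y"
    unfolding Dv_def[symmetric] using Dn by (simp add: divide_simps)
qed

lemma Qk_in_hk: assumes "p \<in> Qk k"
  shows "\<exists>u s. 0 < s \<and> s < pi \<and> p = hk k (u,s)"
proof -
  obtain x y t where p: "p = (x,y,t)" by (cases p) auto
  have in1: "x^2 + y^2 < 1" and eq: "1 - x^2 - y^2 = cos t * ((1 + x)^2 + y^2)"
    and iv: "2 * pi * real_of_int k - pi / 2 < t" "t < 2 * pi * real_of_int k + pi / 2"
    using assms unfolding p Qk_def by auto
  have D: "DD x y > 0" using DD_pos[OF in1] .
  define u where "u = 2 * y / DD x y"
  define s where "s = t + cc k"
  have s: "0 < s" "s < pi" using iv unfolding s_def cc_def by auto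
  have eqD: "1 - x^2 - y^2 = cos t * DD x y" using eq unfolding DD_def .
  have v: "sin s = (1 - x^2 - y^2) / DD x y" unfolding s_def sin_tcc eqD using D by simp
  have Dp: "(1+x)^2+y^2 > 0" using D unfolding DD_def .
  note AI = alg_inv[OF Dp]
  have X: "XX u (sin s) = x"
    unfolding XX_def v u_def DD_def using AI(1,2) by (simp add: algebra_simps)
  have Y: "YY u (sin s) = y"
    unfolding YY_def v u_def DD_def using AI(1,3) by (simp add: algebra_simps)
  have "hk k (u,s) = p" unfolding hk_def p using X Y by (simp add: s_def)
  then show ?thesis using s by blast
qed

lemma Qk_img: "Qk k = hk k ` (UNIV \<times> {0<..<pi})"
proof
  show "Qk k \<subseteq> hk k ` (UNIV \<times> {0<..<pi})"
  proof
    fix p assume "p \<in> Qk k"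
    then obtain u s where "0 < s" "s < pi" "p = hk k (u,s)" using Qk_in_hk by blast
    then show "p \<in> hk k ` (UNIV \<times> {0<..<pi})" by auto
  qed
  show "hk k ` (UNIV \<times> {0<..<pi}) \<subseteq> Qk k" using hk_props(1) by auto
qed

lemma gtrans_img: "gtrans (cc k) ` Qk k = Psi1 ` (UNIV \<times> {0<..<pi})"
proof -
  have "gtrans (cc k) ` Qk k = (\<lambda>q. gtrans (cc k) (hk k q)) ` (UNIV \<times> {0<..<pi})"
    unfolding Qk_img by (simp add: image_image)
  also have "\<dots> = Psi1 ` (UNIV \<times> {0<..<pi})"
    by (rule image_cong) (auto simp: hk_props(2))
  finally show ?thesis .
qed

lemma Qk_connected: "connected (Qk k)"
proof -
  have "continuous_on (UNIV \<times> {0<..<pi}) (hk k)"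
  proof -
    have nz: "\<forall>q \<in> UNIV \<times> {0<..<pi}. (fst q)^2 + (1 + sin (snd q))^2 \<noteq> 0"
    proof
      fix q :: "real \<times> real" assume "q \<in> UNIV \<times> {0<..<pi}"
      then have "sin (snd q) > 0" by (auto intro: sin_gt_zero)
      then have "(fst q)^2 + (1 + sin (snd q))^2 > 0" by (simp add: add_nonneg_pos)
      then show "(fst q)^2 + (1 + sin (snd q))^2 \<noteq> 0" by linarith
    qed
    show ?thesis unfolding hk_def XX_def YY_def using nz
      by (intro continuous_intros; auto)
  qed
  moreover have "connected (UNIV \<times> {0<..<pi::real} :: (real \<times> real) set)"
    by (intro convex_connected convex_Times convex_UNIV convex_real_interval)
  ultimately show ?thesis unfolding Qk_img using connected_continuous_image by blast
qed

lemma Qk_ne: "Qk k \<noteq> {}"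
  unfolding Qk_img using pi_gt_zero by (auto simp: not_le)

lemma Qk_closedin: "closedin (top_of_set DR) (Qk k)"
proof -
  define C where "C = {p::pt3. 1 - (fst p)^2 - (fst (snd p))^2 = cos (snd (snd p)) * ((1 + fst p)^2 + (fst (snd p))^2)
     \<and> 2 * pi * real_of_int k - pi / 2 \<le> snd (snd p) \<and> snd (snd p) \<le> 2 * pi * real_of_int k + pi / 2}"
  have cl: "closed C" unfolding C_def
    by (intro closed_Collect_conj closed_Collect_eq closed_Collect_le continuous_intros)
  have "Qk k = DR \<inter> C"
  proof
    show "Qk k \<subseteq> DR \<inter> C" unfolding Qk_def DR_def C_def by auto
    show "DR \<inter> C \<subseteq> Qk k"
    proof
      fix p assume p: "p \<in> DR \<inter> C"
      obtain x y t where pe: "p = (x,y,t)" by (cases p) auto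
      have in1: "x^2+y^2 < 1" and eq: "1 - x^2 - y^2 = cos t * ((1+x)^2+y^2)"
        and iv: "2 * pi * real_of_int k - pi / 2 \<le> t" "t \<le> 2 * pi * real_of_int k + pi / 2"
        using p unfolding pe DR_def C_def by auto
      have "cos t \<noteq> 0" using eq in1 by auto
      then have "t \<noteq> 2 * pi * real_of_int k - pi / 2" "t \<noteq> 2 * pi * real_of_int k + pi / 2"
        using cos_end1 cos_end2 by auto
      then show "p \<in> Qk k" using in1 eq iv unfolding pe Qk_def by auto
    qed
  qed
  then show ?thesis using closedin_closed_Int[OF cl] by simp
qed

lemma cos_pos_k: assumes "cos t > 0"
  shows "\<exists>k::int. 2 * pi * real_of_int k - pi / 2 < t \<and> t < 2 * pi * real_of_int k + pi / 2"
proof -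
  define k where "k = \<lfloor>(t + pi/2) / (2*pi)\<rfloor>"
  define r where "r = t - 2 * pi * real_of_int k"
  have f1: "real_of_int k \<le> (t + pi/2) / (2*pi)" "(t + pi/2) / (2*pi) < real_of_int k + 1"
    unfolding k_def by linarith+
  have pp: "pi > 0" by (rule pi_gt_zero)
  have r1: "- (pi/2) \<le> r" "r < 3 * pi / 2"
    using f1 pp unfolding r_def by (simp_all add: field_simps)
  have cr: "cos r > 0" unfolding r_def cos_shift using assms .
  have "r \<noteq> - (pi/2)" using cr by auto
  moreover have "\<not> r \<ge> pi/2"
  proof
    assume h: "r \<ge> pi/2"
    have "0 \<le> cos (r - pi)" using h r1 by (intro cos_ge_zero) auto
    moreover have "cos (r - pi) = - cos r" by (simp add: cos_diff)
    ultimately show False using cr by linarith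
  qed
  ultimately have "- (pi/2) < r" "r < pi/2" using r1 by auto
  then show ?thesis unfolding r_def by (intro exI[of _ k]) auto
qed

definition SS :: "pt3 set" where "SS = Qset \<inter> {(x,y,t). x\<^sup>2 + y\<^sup>2 < 1}"

lemma SS_cos: "(x,y,t) \<in> SS \<Longrightarrow> cos t > 0"
proof -
  assume h: "(x,y,t) \<in> SS"
  then have in1: "x^2+y^2<1" and eq: "1 - x^2 - y^2 = cos t * DD x y"
    unfolding SS_def Qset_def DD_def by auto
  have D: "DD x y > 0" by (rule DD_pos[OF in1])
  have "cos t * DD x y > 0" using eq in1 by linarith
  then show ?thesis using D by (simp add: zero_less_mult_iff)
qed

lemma SS_union: "SS = (\<Union>k. Qk k)"
proof
  show "(\<Union>k. Qk k) \<subseteq> SS" unfolding SS_def Qset_def Qk_def by auto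
  show "SS \<subseteq> (\<Union>k. Qk k)"
  proof
    fix p assume p: "p \<in> SS"
    obtain x y t where pe: "p = (x,y,t)" by (cases p) auto
    obtain k where "2 * pi * real_of_int k - pi / 2 < t \<and> t < 2 * pi * real_of_int k + pi / 2"
      using cos_pos_k SS_cos p pe by blast
    then have "p \<in> Qk k" using p unfolding pe SS_def Qset_def Qk_def by auto
    then show "p \<in> (\<Union>k. Qk k)" by blast
  qed
qed

lemma t_sep: assumes "connected C" "C \<subseteq> SS" "p \<in> C" "p \<in> Qk k"
  shows "C \<subseteq> Qk k"
proof
  fix q assume q: "q \<in> C"
  define a where "a = 2 * pi * real_of_int k - pi / 2"
  define b where "b = 2 * pi * real_of_int k + pi / 2"
  define T where "T = (\<lambda>p::pt3. snd (snd p)) ` C"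
  have cT: "connected T" unfolding T_def
    by (rule connected_continuous_image[OF _ assms(1)]) (intro continuous_intros)
  have Tc: "cos s > 0" if sT: "s \<in> T" for s
  proof -
    obtain r where "r \<in> C" "s = snd (snd r)" using sT unfolding T_def by blast
    moreover obtain x y t where "r = (x,y,t)" by (cases r) auto
    ultimately show ?thesis using SS_cos assms(2) by auto
  qed
  have ca: "cos a = 0" "cos b = 0" unfolding a_def b_def using cos_end1 cos_end2 by auto
  define t0 where "t0 = snd (snd p)"
  define t1 where "t1 = snd (snd q)"
  have t0T: "t0 \<in> T" "t1 \<in> T" unfolding t0_def t1_def T_def using assms(3) q by auto
  have t0i: "a < t0" "t0 < b" using assms(4) unfolding t0_def a_def b_def Qk_def by auto
  have "\<not> t1 \<ge> b"
  proof
    assume "t1 \<ge> b"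
    then have "b \<in> T" using connected_contains_Icc[OF cT t0T] t0i by auto
    then show False using Tc ca by fastforce
  qed
  moreover have "\<not> t1 \<le> a"
  proof
    assume "t1 \<le> a"
    then have "a \<in> T" using connected_contains_Icc[OF cT t0T(2) t0T(1)] t0i by auto
    then show False using Tc ca by fastforce
  qed
  ultimately have "a < t1" "t1 < b" by auto
  moreover have "q \<in> SS" using q assms(2) by auto
  moreover obtain x y t where "q = (x,y,t)" by (cases q) auto
  ultimately show "q \<in> Qk k" unfolding SS_def Qset_def Qk_def a_def b_def t1_def by auto
qed

lemma Qk_sub_SS: "Qk k \<subseteq> SS" using SS_union by auto

lemma Qk_comp: "Qk k \<in> components SS"
  unfolding in_components_maximal
proof (intro conjI allI impI)
  show "Qk k \<noteq> {}" "Qk k \<subseteq> SS" "connected (Qk k)" using Qk_ne Qk_sub_SS Qk_connected by auto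
  fix D assume D: "D \<noteq> {} \<and> Qk k \<subseteq> D \<and> D \<subseteq> SS \<and> connected D"
  obtain p where "p \<in> Qk k" using Qk_ne by blast
  then have "D \<subseteq> Qk k" using t_sep[of D p k] D by auto
  then show "D = Qk k" using D by auto
qed

lemma comps: "components SS = range Qk"
proof
  show "range Qk \<subseteq> components SS" using Qk_comp by auto
  show "components SS \<subseteq> range Qk"
  proof
    fix C assume C: "C \<in> components SS"
    then have Cp: "C \<noteq> {}" "C \<subseteq> SS" "connected C"
      and Cm: "\<And>D. D \<noteq> {} \<and> C \<subseteq> D \<and> D \<subseteq> SS \<and> connected D \<Longrightarrow> D = C"
      unfolding in_components_maximal by auto
    obtain q where q: "q \<in> C" using Cp by blast
    then obtain k where k: "q \<in> Qk k" using Cp SS_union by blast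
    have "C \<subseteq> Qk k" by (rule t_sep[OF Cp(3) Cp(2) q k])
    then have "Qk k = C" using Cm[of "Qk k"] Qk_ne Qk_sub_SS Qk_connected by auto
    then show "C \<in> range Qk" by auto
  qed
qed

theorem mainTheorem5:
  shows "components (Qset \<inter> {(x,y,t). x\<^sup>2 + y\<^sup>2 < 1}) = range Qk \<and>
         (\<forall>k. properly_embedded_minimal_DR (Qk k) \<and>
              (\<exists>c. gtrans c ` Qk k = Psi1 ` (UNIV \<times> {0<..<pi})))"
proof (intro conjI allI)
  show "components (Qset \<inter> {(x,y,t). x\<^sup>2 + y\<^sup>2 < 1}) = range Qk"
    using comps unfolding SS_def .
  fix k
  show "properly_embedded_minimal_DR (Qk k)"
    unfolding properly_embedded_minimal_DR_def using minimal_Qk Qk_closedin by blast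
  show "\<exists>c. gtrans c ` Qk k = Psi1 ` (UNIV \<times> {0<..<pi})"
    using gtrans_img by blast
qed

end
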